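(* Let $n\ge 1$, let $\mathbf r\in\mathbb{R}^n$ have all entries negative, let $\lambda>0$, let $\mathbf R = \operatorname{diag}(\exp(-\mathbf r/\lambda))$, let $\mathbf P$ be an $n\times n$ row-stochastic matrix, let $\tilde{\mathbf P} = (\mathbf P+\mathbf P^\top)/2$, and assume $\mathbf R - \tilde{\mathbf P}$ is invertible. Fix an index $s_T\in\{1,\dots,n\}$ (corresponding to a terminal state). Consider the problem $$\min_{\mathbf v\in\mathbb{R}^n} \exp(\mathbf v)^\top(\mathbf R - \tilde{\mathbf P})\exp(\mathbf v) \quad\text{subject to}\quad v(s_T) = 0 .$$ If $\mathbf v^*$ is a minimizer of this problem, then there is a scalar $\alpha\in\mathbb{R}$ such that $$\exp(\mathbf v^* ) = \alpha\,(\mathbf R - \tilde{\mathbf P})^{-1}\mathbf b_{s_T},$$ i.e., $\mathbf v^*$ is the entrywise logarithm of a scalar multiple of the column of the symmetrized default representation $(\mathbf R - \tilde{\mathbf P})^{-1}$ corresponding to $s_T$.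
   Context: $\exp$, $\log$ and $\operatorname{diag}$ act entrywise; $\mathbf b_{s_T}$ is the standard basis vector with a $1$ in entry $s_T$. The matrix $(\mathbf R - \tilde{\mathbf P})^{-1}$ is called the (symmetrized) default representation (DR), where $\mathbf r$ is the vector of state rewards and $\mathbf P$ the transition matrix induced by a default policy. *)

theory Defs
  imports "HOL-Analysis.Analysis"
begin

definition diag_mat :: "real ^ 'n \<Rightarrow> real ^ 'n ^ 'n" where
  "diag_mat d = (\<chi> i j. if i = j then d $ i else 0)"

definition vexp :: "real ^ 'n \<Rightarrow> real ^ 'n" where
  "vexp v = (\<chi> i. exp (v $ i))"

definition row_stochastic :: "real ^ 'n ^ 'n \<Rightarrow> bool" where
  "row_stochastic P \<longleftrightarrow> (\<forall>i j. 0 \<le> P $ i $ j) \<and> (\<forall>i. (\<Sum>j\<in>UNIV. P $ i $ j) = 1)"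

end

theory Submission imports Defs begin
lemma quad0:
  fixes a b c :: real
  assumes c: "c > 0" and h: "\<forall>s. s > -c \<longrightarrow> 0 \<le> 2 * s * a + s ^ 2 * b"
  shows "a = 0"
proof (rule ccontr)
  assume a: "a \<noteq> 0"
  define d where "d = min (1/(\<bar>b\<bar>+1)) (c/(2*\<bar>a\<bar>))"
  have d0: "d > 0" using a c by (simp add: d_def)
  have d1: "d * \<bar>b\<bar> < 1"
  proof -
    have "d \<le> 1/(\<bar>b\<bar>+1)" by (simp add: d_def)
    hence "d * \<bar>b\<bar> \<le> \<bar>b\<bar>/(\<bar>b\<bar>+1)" using mult_right_mono[OF _ abs_ge_zero, of d "1/(\<bar>b\<bar>+1)" b] by simp
    also have "\<dots> < 1" by simp
    finally show ?thesis .
  qed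
  have d2: "d * \<bar>a\<bar> \<le> c/2"
  proof -
    have "d \<le> c/(2*\<bar>a\<bar>)" by (simp add: d_def)
    hence "d * \<bar>a\<bar> \<le> c/(2*\<bar>a\<bar>) * \<bar>a\<bar>" using mult_right_mono[OF _ abs_ge_zero, of d "c/(2*\<bar>a\<bar>)" a] by blast
    thus ?thesis using a by simp
  qed
  have "a*d \<le> \<bar>a\<bar>*d" using d0 by (simp add: mult_right_mono)
  hence "- a * d > -c" using d2 c by (simp add: mult.commute)
  hence "0 \<le> 2*(-a*d)*a + (-a*d)^2*b" using h by blast
  hence "0 \<le> a^2 * d * (d*b - 2)" by (simp add: power2_eq_square algebra_simps)
  moreover have "d*b - 2 < 0" using d1 by (smt (verit) abs_ge_self mult_left_mono d0 abs_mult abs_of_pos)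
  moreover have "a^2 * d > 0" using a d0 by simp
  ultimately show False by (simp add: mult_less_0_iff zero_le_mult_iff)
qed

lemma my_matrix_inv_left:
  fixes A :: "real^'n^'m" assumes "invertible A"
  shows "matrix_inv A ** A = mat 1"
  using someI_ex[OF assms[unfolded invertible_def]] unfolding matrix_inv_def by blast

lemma sym_inner:
  fixes M :: "real^'n^'n" assumes "transpose M = M"
  shows "x \<bullet> (M *v y) = (M *v x) \<bullet> y"
  by (metis assms dot_lmul_matrix vector_transpose_matrix)

theorem proposition3p10:
  fixes r :: "real ^ 'n" and lam :: real and P :: "real ^ 'n ^ 'n"
    and sT :: 'n and vstar :: "real ^ 'n"
  assumes r_neg: "\<forall>i. r $ i < 0"
    and lam_pos: "lam > 0"
    and P_stoch: "row_stochastic P"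
    and inv: "invertible (diag_mat (\<chi> i. exp (- r $ i / lam)) - (1/2) *\<^sub>R (P + transpose P))"
    and feas: "vstar $ sT = 0"
    and opt: "\<forall>v. v $ sT = 0 \<longrightarrow>
        vexp vstar \<bullet> ((diag_mat (\<chi> i. exp (- r $ i / lam)) - (1/2) *\<^sub>R (P + transpose P)) *v vexp vstar)
        \<le> vexp v \<bullet> ((diag_mat (\<chi> i. exp (- r $ i / lam)) - (1/2) *\<^sub>R (P + transpose P)) *v vexp v)"
  shows "\<exists>\<alpha>::real. vexp vstar =
    \<alpha> *\<^sub>R (matrix_inv (diag_mat (\<chi> i. exp (- r $ i / lam)) - (1/2) *\<^sub>R (P + transpose P)) *v axis sT 1)"
proof -
  define M where "M = diag_mat (\<chi> i. exp (- r $ i / lam)) - (1/2) *\<^sub>R (P + transpose P)"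
  define x where "x = vexp vstar"
  have symM: "transpose M = M"
    by (simp add: M_def transpose_def diag_mat_def vec_eq_iff)
  have xpos: "\<And>j. x $ j > 0" by (simp add: x_def vexp_def)
  have xsT: "x $ sT = 1" by (simp add: x_def vexp_def feas)
  have optx: "\<And>y. (\<forall>j. y $ j > 0) \<Longrightarrow> y $ sT = 1 \<Longrightarrow> x \<bullet> (M *v x) \<le> y \<bullet> (M *v y)"
  proof -
    fix y :: "real^'n" assume yp: "\<forall>j. y $ j > 0" and ys: "y $ sT = 1"
    define v where "v = (\<chi> j. ln (y $ j))"
    have "vexp v = y" using yp by (simp add: v_def vexp_def vec_eq_iff)
    moreover have "v $ sT = 0" using ys by (simp add: v_def)
    ultimately show "x \<bullet> (M *v x) \<le> y \<bullet> (M *v y)" using opt unfolding M_def x_def by metis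
  qed
  have zero: "(M *v x) $ i = 0" if ne: "i \<noteq> sT" for i
  proof -
    define b where "b = axis i 1 \<bullet> (M *v axis i (1::real))"
    have "\<forall>s. s > - (x $ i) \<longrightarrow> 0 \<le> 2 * s * ((M *v x) $ i) + s ^ 2 * b"
    proof (intro allI impI)
      fix s assume s: "s > - (x $ i)"
      define y where "y = x + s *\<^sub>R axis i 1"
      have "\<forall>j. y $ j > 0" using s xpos by (auto simp: y_def axis_def)
      moreover have "y $ sT = 1" using ne xsT by (simp add: y_def axis_def)
      ultimately have le: "x \<bullet> (M *v x) \<le> y \<bullet> (M *v y)" by (rule optx)
      have e1: "x \<bullet> (M *v axis i 1) = (M *v x) $ i"
        using sym_inner[OF symM] by (simp add: inner_axis)
      have e2: "axis i 1 \<bullet> (M *v x) = (M *v x) $ i"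
        by (simp add: inner_commute[of "axis i 1"] inner_axis)
      have "y \<bullet> (M *v y) = x \<bullet> (M *v x) + s * (x \<bullet> (M *v axis i 1)) + s * (axis i 1 \<bullet> (M *v x)) + s^2 * b"
        by (simp add: y_def b_def matrix_vector_right_distrib matrix_vector_mult_scaleR inner_add_left inner_add_right power2_eq_square algebra_simps)
      with le e1 e2 show "0 \<le> 2 * s * ((M *v x) $ i) + s ^ 2 * b" by simp
    qed
    thus ?thesis using quad0[of "x $ i"] xpos by blast
  qed
  define a where "a = (M *v x) $ sT"
  have Mx: "M *v x = a *\<^sub>R axis sT 1"
    using zero by (auto simp: vec_eq_iff a_def axis_def)
  have "x = matrix_inv M *v (M *v x)"
    using my_matrix_inv_left[OF inv[folded M_def]]
    by (simp add: matrix_vector_mul_assoc)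
  also have "\<dots> = a *\<^sub>R (matrix_inv M *v axis sT 1)"
    by (simp add: Mx matrix_vector_mult_scaleR)
  finally show ?thesis unfolding M_def x_def by blast
qed

end
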